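(* Let $d\ge 1$ and let $h:\mathbb{R}^d\to\mathbb{R}$ be a continuous, integrable ($\int_{\mathbb{R}^d}|h(\tau)|\,d\tau<\infty$), positive semi-definite function such that $h(\tau)>0$ for all $\tau\in\mathbb{R}^d$. Consider the family $\mathcal{K}_h$ of all functions of the form $$k_K(\tau)=\sum_{k=1}^{K}\alpha_k\, h(\tau\odot\gamma_k)\cos(2\pi\,\omega_k^T\tau),\qquad \tau\in\mathbb{R}^d,$$ where $K\in\mathbb{N}^*=\{1,2,\dots\}$, $\alpha_k\in\mathbb{R}$, $\omega_k\in[0,\infty)^d$ and $\gamma_k\in(0,\infty)^d$. Then $\mathcal{K}_h$ is dense in the set of stationary real-valued kernels on $\mathbb{R}^d$ with respect to pointwise convergence: for every continuous positive semi-definite function $k:\mathbb{R}^d\to\mathbb{R}$ there is a sequence $(k^{(n)})_{n\ge1}$ of elements of $\mathcal{K}_h$ with $k^{(n)}(\tau)\to k(\tau)$ for every $\tau\in\mathbb{R}^d$. *)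

theory Defs
  imports "HOL-Analysis.Analysis"
begin

definition psd_fun :: "('a::real_vector \<Rightarrow> real) \<Rightarrow> bool" where
  "psd_fun k \<longleftrightarrow> (\<forall>\<tau>. k (- \<tau>) = k \<tau>) \<and>
     (\<forall>(n::nat) (x::nat \<Rightarrow> 'a) (c::nat \<Rightarrow> real).
        (\<Sum>i<n. \<Sum>j<n. c i * c j * k (x i - x j)) \<ge> 0)"

definition hadamard :: "real^'d \<Rightarrow> real^'d \<Rightarrow> real^'d" where
  "hadamard x y = (\<chi> i. x $ i * y $ i)"

definition kernel_family :: "(real^'d \<Rightarrow> real) \<Rightarrow> (real^'d \<Rightarrow> real) set" where
  "kernel_family h = {f. \<exists>(K::nat) (\<alpha>::nat \<Rightarrow> real) (\<omega>::nat \<Rightarrow> real^'d) (\<gamma>::nat \<Rightarrow> real^'d).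
      K \<ge> 1 \<and> (\<forall>k\<in>{1..K}. (\<forall>i. \<omega> k $ i \<ge> 0) \<and> (\<forall>i. \<gamma> k $ i > 0)) \<and>
      f = (\<lambda>\<tau>. \<Sum>k=1..K. \<alpha> k * h (hadamard \<tau> (\<gamma> k)) * cos (2 * pi * (\<omega> k \<bullet> \<tau>)))}"

end

theory Submission
  imports Defs
begin


lemma fam_zero: "(\<lambda>\<tau>. 0) \<in> kernel_family h"
  unfolding kernel_family_def
  apply (rule CollectI)
  apply (rule exI[of _ 1], rule exI[of _ "\<lambda>_. 0"], rule exI[of _ "\<lambda>_. 0"], rule exI[of _ "\<lambda>_. \<chi> i. 1"])
  by auto

lemma fam_scale:
  assumes "f \<in> kernel_family h"
  shows "(\<lambda>\<tau>. c * f \<tau>) \<in> kernel_family h"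
proof -
  from assms obtain K \<alpha> \<omega> \<gamma> where K: "(K::nat) \<ge> 1" "(\<forall>k\<in>{1..K}. (\<forall>i. \<omega> k $ i \<ge> 0) \<and> (\<forall>i. \<gamma> k $ i > 0))"
    "f = (\<lambda>\<tau>. \<Sum>k=1..K. \<alpha> k * h (hadamard \<tau> (\<gamma> k)) * cos (2 * pi * (\<omega> k \<bullet> \<tau>)))"
    unfolding kernel_family_def by blast
  show ?thesis unfolding kernel_family_def
    apply (rule CollectI)
    apply (rule exI[of _ K], rule exI[of _ "\<lambda>k. c * \<alpha> k"], rule exI[of _ \<omega>], rule exI[of _ \<gamma>])
    using K by (auto simp: sum_distrib_left mult.assoc)
qed

lemma fam_add:
  assumes "f \<in> kernel_family h" "g \<in> kernel_family h"
  shows "(\<lambda>\<tau>. f \<tau> + g \<tau>) \<in> kernel_family h"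
proof -
  from assms(1) obtain K \<alpha> \<omega> \<gamma> where K: "(K::nat) \<ge> 1" "(\<forall>k\<in>{1..K}. (\<forall>i. \<omega> k $ i \<ge> 0) \<and> (\<forall>i. \<gamma> k $ i > 0))"
    "f = (\<lambda>\<tau>. \<Sum>k=1..K. \<alpha> k * h (hadamard \<tau> (\<gamma> k)) * cos (2 * pi * (\<omega> k \<bullet> \<tau>)))"
    unfolding kernel_family_def by blast
  from assms(2) obtain L \<alpha>' \<omega>' \<gamma>' where L: "(L::nat) \<ge> 1" "(\<forall>k\<in>{1..L}. (\<forall>i. \<omega>' k $ i \<ge> 0) \<and> (\<forall>i. \<gamma>' k $ i > 0))"
    "g = (\<lambda>\<tau>. \<Sum>k=1..L. \<alpha>' k * h (hadamard \<tau> (\<gamma>' k)) * cos (2 * pi * (\<omega>' k \<bullet> \<tau>)))"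
    unfolding kernel_family_def by blast
  define A where "A k = (if k \<le> K then \<alpha> k else \<alpha>' (k - K))" for k
  define W where "W k = (if k \<le> K then \<omega> k else \<omega>' (k - K))" for k
  define G where "G k = (if k \<le> K then \<gamma> k else \<gamma>' (k - K))" for k
  define t where "t \<tau> k = A k * h (hadamard \<tau> (G k)) * cos (2 * pi * (W k \<bullet> \<tau>))" for \<tau> k
  have split: "(\<Sum>k=1..K+L. t \<tau> k) = (\<Sum>k=1..K. t \<tau> k) + (\<Sum>k=K+1..K+L. t \<tau> k)" for \<tau>
    by (rule sum.ub_add_nat) simp
  have shift: "(\<Sum>k=K+1..K+L. t \<tau> k) = (\<Sum>k=1..L. t \<tau> (k + K))" for \<tau>
    using sum.shift_bounds_cl_nat_ivl[of "t \<tau>" 1 K L] by (simp add: add.commute)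
  have eq: "(\<lambda>\<tau>. f \<tau> + g \<tau>) = (\<lambda>\<tau>. \<Sum>k=1..K+L. t \<tau> k)"
  proof
    fix \<tau>
    have "(\<Sum>k=1..K. t \<tau> k) = f \<tau>" unfolding K(3) t_def A_def W_def G_def
      by (rule sum.cong) auto
    moreover have "(\<Sum>k=1..L. t \<tau> (k + K)) = g \<tau>" unfolding L(3) t_def A_def W_def G_def
      by (rule sum.cong) auto
    ultimately show "f \<tau> + g \<tau> = (\<Sum>k=1..K+L. t \<tau> k)" using split shift by simp
  qed
  have cond: "\<forall>k\<in>{1..K+L}. (\<forall>i. W k $ i \<ge> 0) \<and> (\<forall>i. G k $ i > 0)"
  proof
    fix k assume k: "k \<in> {1..K+L}"
    show "(\<forall>i. W k $ i \<ge> 0) \<and> (\<forall>i. G k $ i > 0)"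
    proof (cases "k \<le> K")
      case True thus ?thesis using K(2) k by (auto simp: W_def G_def)
    next
      case False
      hence "k - K \<in> {1..L}" using k by auto
      thus ?thesis using L(2) False by (auto simp: W_def G_def)
    qed
  qed
  show ?thesis unfolding kernel_family_def eq
    apply (rule CollectI)
    apply (rule exI[of _ "K+L"], rule exI[of _ A], rule exI[of _ W], rule exI[of _ G])
    using K(1) cond unfolding t_def by simp
qed

definition AR :: "(real^'d \<Rightarrow> real) \<Rightarrow> real \<Rightarrow> (real^'d \<Rightarrow> real) \<Rightarrow> bool" where
  "AR h R g \<longleftrightarrow> (\<forall>\<epsilon>>0. \<exists>f\<in>kernel_family h. \<forall>\<tau>. norm \<tau> \<le> R \<longrightarrow> \<bar>f \<tau> - g \<tau>\<bar> \<le> \<epsilon>)"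

lemma AR_zero: "AR h R (\<lambda>\<tau>. 0)"
  unfolding AR_def by (auto intro!: bexI[OF _ fam_zero])

lemma AR_add:
  assumes "AR h R f" "AR h R g"
  shows "AR h R (\<lambda>\<tau>. f \<tau> + g \<tau>)"
  unfolding AR_def
proof (intro allI impI)
  fix \<epsilon> :: real assume e: "\<epsilon> > 0"
  obtain f1 where f1: "f1 \<in> kernel_family h" "\<forall>\<tau>. norm \<tau> \<le> R \<longrightarrow> \<bar>f1 \<tau> - f \<tau>\<bar> \<le> \<epsilon>/2"
    using assms(1) e unfolding AR_def by (meson half_gt_zero)
  obtain g1 where g1: "g1 \<in> kernel_family h" "\<forall>\<tau>. norm \<tau> \<le> R \<longrightarrow> \<bar>g1 \<tau> - g \<tau>\<bar> \<le> \<epsilon>/2"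
    using assms(2) e unfolding AR_def by (meson half_gt_zero)
  show "\<exists>F\<in>kernel_family h. \<forall>\<tau>. norm \<tau> \<le> R \<longrightarrow> \<bar>F \<tau> - (f \<tau> + g \<tau>)\<bar> \<le> \<epsilon>"
    apply (rule bexI[of _ "\<lambda>\<tau>. f1 \<tau> + g1 \<tau>"])
    subgoal proof (intro allI impI)
      fix \<tau> :: "real^'a" assume "norm \<tau> \<le> R"
      hence "\<bar>f1 \<tau> - f \<tau>\<bar> \<le> \<epsilon>/2" "\<bar>g1 \<tau> - g \<tau>\<bar> \<le> \<epsilon>/2" using f1 g1 by auto
      thus "\<bar>f1 \<tau> + g1 \<tau> - (f \<tau> + g \<tau>)\<bar> \<le> \<epsilon>" by linarith
    qed
    using fam_add f1 g1 by blast
qed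

lemma AR_scale:
  assumes "AR h R f"
  shows "AR h R (\<lambda>\<tau>. c * f \<tau>)"
  unfolding AR_def
proof (intro allI impI)
  fix \<epsilon> :: real assume e: "\<epsilon> > 0"
  have "\<epsilon> / (\<bar>c\<bar> + 1) > 0" using e by simp
  then obtain f1 where f1: "f1 \<in> kernel_family h" "\<forall>\<tau>. norm \<tau> \<le> R \<longrightarrow> \<bar>f1 \<tau> - f \<tau>\<bar> \<le> \<epsilon>/(\<bar>c\<bar> + 1)"
    using assms unfolding AR_def by blast
  have H: "\<bar>c * f1 \<tau> - c * f \<tau>\<bar> \<le> \<epsilon>" if "norm \<tau> \<le> R" for \<tau>
  proof -
    have "c * f1 \<tau> - c * f \<tau> = c * (f1 \<tau> - f \<tau>)" by (simp add: algebra_simps)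
    hence "\<bar>c * f1 \<tau> - c * f \<tau>\<bar> = \<bar>c\<bar> * \<bar>f1 \<tau> - f \<tau>\<bar>" by (simp add: abs_mult)
    also have "\<dots> \<le> (\<bar>c\<bar> + 1) * (\<epsilon>/(\<bar>c\<bar> + 1))"
      by (rule mult_mono) (use f1 that in auto)
    also have "\<dots> = \<epsilon>" by simp
    finally show ?thesis .
  qed
  show "\<exists>F\<in>kernel_family h. \<forall>\<tau>. norm \<tau> \<le> R \<longrightarrow> \<bar>F \<tau> - c * f \<tau>\<bar> \<le> \<epsilon>"
  proof (rule bexI[of _ "\<lambda>\<tau>. c * f1 \<tau>"])
    show "(\<lambda>\<tau>. c * f1 \<tau>) \<in> kernel_family h" by (rule fam_scale[OF f1(1)])
  qed (use H in auto)
qed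

lemma AR_sum:
  assumes "finite I" "\<And>i. i \<in> I \<Longrightarrow> AR h R (g i)"
  shows "AR h R (\<lambda>\<tau>. \<Sum>i\<in>I. g i \<tau>)"
  using assms
proof (induction I rule: finite_induct)
  case empty thus ?case using AR_zero by simp
next
  case (insert x F)
  have a: "AR h R (g x)" using insert.prems by simp
  have b: "AR h R (\<lambda>\<tau>. \<Sum>i\<in>F. g i \<tau>)" using insert.IH insert.prems by simp
  have "AR h R (\<lambda>\<tau>. g x \<tau> + (\<Sum>i\<in>F. g i \<tau>))"
    using AR_add[OF a b] .
  moreover have "(\<lambda>\<tau>. \<Sum>i\<in>insert x F. g i \<tau>) = (\<lambda>\<tau>. g x \<tau> + (\<Sum>i\<in>F. g i \<tau>))"
    using insert.hyps by simp
  ultimately show ?case by simp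
qed

lemma AR_lim:
  assumes "\<And>\<epsilon>. \<epsilon> > 0 \<Longrightarrow> \<exists>g. AR h R g \<and> (\<forall>\<tau>. norm \<tau> \<le> R \<longrightarrow> \<bar>g \<tau> - k \<tau>\<bar> \<le> \<epsilon>)"
  shows "AR h R k"
  unfolding AR_def
proof (intro allI impI)
  fix \<epsilon> :: real assume e: "\<epsilon> > 0"
  obtain g where g: "AR h R g" "\<forall>\<tau>. norm \<tau> \<le> R \<longrightarrow> \<bar>g \<tau> - k \<tau>\<bar> \<le> \<epsilon>/2"
    using assms[of "\<epsilon>/2"] e by auto
  obtain f where f: "f \<in> kernel_family h" "\<forall>\<tau>. norm \<tau> \<le> R \<longrightarrow> \<bar>f \<tau> - g \<tau>\<bar> \<le> \<epsilon>/2"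
    using g(1) e unfolding AR_def by (meson half_gt_zero)
  have "\<bar>f \<tau> - k \<tau>\<bar> \<le> \<epsilon>" if "norm \<tau> \<le> R" for \<tau>
  proof -
    have "\<bar>f \<tau> - g \<tau>\<bar> \<le> \<epsilon>/2" "\<bar>g \<tau> - k \<tau>\<bar> \<le> \<epsilon>/2" using f g that by auto
    thus ?thesis by linarith
  qed
  thus "\<exists>f\<in>kernel_family h. \<forall>\<tau>. norm \<tau> \<le> R \<longrightarrow> \<bar>f \<tau> - k \<tau>\<bar> \<le> \<epsilon>"
    using f(1) by blast
qed


lemma norm_cis_minus_one: "norm (cis b - 1) \<le> \<bar>b\<bar>"
proof -
  have "norm (cis b - 1) = 2 * \<bar>sin (b/2)\<bar>" using dist_exp_i_1[of b] by (simp add: cis_conv_exp)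
  also have "\<dots> \<le> 2 * \<bar>b/2\<bar>" using abs_sin_x_le_abs_x[of "b/2"] by simp
  finally show ?thesis by simp
qed

lemma cos_neg_series:
  fixes a b :: real
  assumes b: "\<bar>b\<bar> \<le> 1/2"
  shows "\<bar>(\<Sum>n<N. \<Sum>k\<le>n. real (n choose k) * (-1)^k * cos (a + real k * b)) - cos (a - b)\<bar> \<le> (1/2)^N"
proof -
  define z where "z = cis b"
  define w where "w = 1 - z"
  have z0: "z \<noteq> 0" unfolding z_def by simp
  have inner: "(\<Sum>k\<le>n. of_real (real (n choose k) * (-1)^k) * cis (a + real k * b)) = cis a * w ^ n" for n
  proof -
    have "w ^ n = (- z + 1) ^ n" unfolding w_def by simp
    also have "\<dots> = (\<Sum>k\<le>n. of_nat (n choose k) * (- z)^k * 1^(n-k))" by (rule binomial_ring)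
    finally have "cis a * w ^ n = cis a * (\<Sum>k\<le>n. of_nat (n choose k) * (- z)^k * 1^(n-k))"
      by (rule arg_cong)
    also have "\<dots> = (\<Sum>k\<le>n. cis a * (of_nat (n choose k) * (- z)^k))"
      by (simp add: sum_distrib_left)
    also have "\<dots> = (\<Sum>k\<le>n. of_real (real (n choose k) * (-1)^k) * cis (a + real k * b))"
    proof (rule sum.cong[OF refl])
      fix k :: nat
      have "z^k = cis (real k * b)" unfolding z_def by (rule Complex.DeMoivre)
      hence "(- z)^k = (-1)^k * cis (real k * b)" using power_minus[of z k] by simp

      moreover have "cis (a + real k * b) = cis a * cis (real k * b)" by (simp add: cis_mult)
      ultimately show "cis a * (of_nat (n choose k) * (- z)^k) = of_real (real (n choose k) * (-1)^k) * cis (a + real k * b)"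
        by simp
    qed
    finally show ?thesis by simp
  qed
  have w1: "w \<noteq> 1" unfolding w_def using z0 by simp
  have geo: "(\<Sum>n<N. w^n) = (1 - w^N) / z"
    using sum_gp_strict[of w N] w1 by (simp add: w_def)
  define S where "S = (\<Sum>n<N. \<Sum>k\<le>n. real (n choose k) * (-1)^k * cos (a + real k * b))"
  have SRe: "S = Re (\<Sum>n<N. \<Sum>k\<le>n. of_real (real (n choose k) * (-1)^k) * cis (a + real k * b))"
    unfolding S_def by simp
  also have "\<dots> = Re (cis a * (\<Sum>n<N. w^n))" by (simp only: inner sum_distrib_left)
  also have "\<dots> = Re (cis a * (1 - w^N) / z)" by (simp add: geo)
  also have "\<dots> = Re (cis (a - b) - cis (a - b) * w^N)"
  proof -
    have "cis a * (1 - w^N) / z = (cis a / z) * (1 - w^N)" by simp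
    also have "cis a / z = cis (a - b)" unfolding z_def by (rule cis_divide)
    finally show ?thesis by (simp add: right_diff_distrib)
  qed
  also have "\<dots> = cos (a - b) - Re (cis (a - b) * w^N)" by simp
  finally have "S - cos (a - b) = - Re (cis (a - b) * w^N)" by simp
  hence "\<bar>S - cos (a - b)\<bar> \<le> norm (cis (a - b) * w^N)" using abs_Re_le_cmod by (metis abs_minus_cancel)
  also have "\<dots> = norm w ^ N" by (simp add: norm_mult norm_power)
  also have "\<dots> \<le> (1/2)^N"
  proof (rule power_mono)
    have "norm w = norm (cis b - 1)" unfolding w_def z_def by (simp add: norm_minus_commute)
    thus "norm w \<le> 1/2" using norm_cis_minus_one[of b] b by linarith
  qed simp
  finally show ?thesis unfolding S_def .
qed


lemma hadamard_const: "hadamard \<tau> (\<chi> i. c) = c *\<^sub>R \<tau>"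
  by (simp add: hadamard_def vec_eq_iff mult.commute)

lemma AR_cos_pos:
  fixes h :: "real^'d \<Rightarrow> real"
  assumes cont: "continuous_on UNIV h" and h0: "h 0 > 0" and om: "\<forall>i. \<omega> $ i \<ge> 0"
  shows "AR h R (\<lambda>\<tau>. cos (\<omega> \<bullet> \<tau>))"
  unfolding AR_def
proof (intro allI impI)
  fix \<epsilon> :: real assume e: "\<epsilon> > 0"
  have "isCont h 0" using cont by (simp add: continuous_on_eq_continuous_at)
  then obtain \<delta> where d: "\<delta> > 0" "\<And>x. dist x 0 < \<delta> \<Longrightarrow> dist (h x) (h 0) < \<epsilon> * h 0"
    unfolding continuous_at_eps_delta using e h0 by (meson mult_pos_pos)
  define c where "c = \<delta> / (\<bar>R\<bar> + 1)"
  have c: "c > 0" unfolding c_def using d by simp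
  define \<omega>' where "\<omega>' = (1 / (2*pi)) *\<^sub>R \<omega>"
  define f where "f = (\<lambda>\<tau>::real^'d. \<Sum>k\<in>{1..(1::nat)}. (\<lambda>_. 1 / h 0) k * h (hadamard \<tau> ((\<lambda>_. \<chi> i. c) k)) * cos (2 * pi * ((\<lambda>_. \<omega>') k \<bullet> \<tau>)))"
  have fam: "f \<in> kernel_family h"
    unfolding kernel_family_def f_def
    apply (rule CollectI)
    apply (rule exI[of _ 1], rule exI[of _ "\<lambda>_. 1 / h 0"], rule exI[of _ "\<lambda>_. \<omega>'"], rule exI[of _ "\<lambda>_. \<chi> i. c"])
    using om c by (auto simp: atLeastAtMost_singleton \<omega>'_def)
  have fval: "f \<tau> = h (c *\<^sub>R \<tau>) / h 0 * cos (\<omega> \<bullet> \<tau>)" for \<tau>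
    unfolding f_def by (simp add: hadamard_const \<omega>'_def)
  have "\<bar>f \<tau> - cos (\<omega> \<bullet> \<tau>)\<bar> \<le> \<epsilon>" if "norm \<tau> \<le> R" for \<tau>
  proof -
    have "norm (c *\<^sub>R \<tau>) = c * norm \<tau>" using c by simp
    also have "\<dots> \<le> c * \<bar>R\<bar>" using that c by (intro mult_left_mono) auto
    also have "\<dots> < \<delta>" unfolding c_def using d(1)
      by (simp add: field_simps)
    finally have "\<bar>h (c *\<^sub>R \<tau>) - h 0\<bar> < \<epsilon> * h 0" using d(2)[of "c *\<^sub>R \<tau>"] by (simp add: dist_real_def)
    hence 1: "\<bar>h (c *\<^sub>R \<tau>) / h 0 - 1\<bar> \<le> \<epsilon>" using h0
      by (simp add: abs_le_iff abs_less_iff field_simps)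
    have "f \<tau> - cos (\<omega> \<bullet> \<tau>) = (h (c *\<^sub>R \<tau>) / h 0 - 1) * cos (\<omega> \<bullet> \<tau>)"
      by (simp add: fval algebra_simps)
    hence "\<bar>f \<tau> - cos (\<omega> \<bullet> \<tau>)\<bar> = \<bar>h (c *\<^sub>R \<tau>) / h 0 - 1\<bar> * \<bar>cos (\<omega> \<bullet> \<tau>)\<bar>" by (simp add: abs_mult)
    also have "\<dots> \<le> \<epsilon> * 1" using 1 by (intro mult_mono) auto
    finally show ?thesis by simp
  qed
  thus "\<exists>f\<in>kernel_family h. \<forall>\<tau>. norm \<tau> \<le> R \<longrightarrow> \<bar>f \<tau> - cos (\<omega> \<bullet> \<tau>)\<bar> \<le> \<epsilon>"
    using fam by blast
qed

lemma AR_cos_series: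
  fixes h :: "real^'d \<Rightarrow> real"
  assumes all: "\<And>k::nat. AR h R (\<lambda>\<tau>. cos ((p + real k *\<^sub>R q) \<bullet> \<tau>))"
    and q: "norm q * R \<le> 1/2"
  shows "AR h R (\<lambda>\<tau>. cos ((p - q) \<bullet> \<tau>))"
proof (rule AR_lim)
  fix \<epsilon> :: real assume e: "\<epsilon> > 0"
  obtain N where N: "(1/2::real)^N < \<epsilon>" using real_arch_pow_inv[OF e, of "1/2"] by auto
  define g where "g = (\<lambda>\<tau>. \<Sum>n<N. \<Sum>k\<le>n. real (n choose k) * (-1)^k * cos ((p + real k *\<^sub>R q) \<bullet> \<tau>))"
  have "AR h R g" unfolding g_def
    by (intro AR_sum AR_scale all) auto
  moreover have "\<bar>g \<tau> - cos ((p - q) \<bullet> \<tau>)\<bar> \<le> \<epsilon>" if "norm \<tau> \<le> R" for \<tau>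
  proof -
    have "\<bar>q \<bullet> \<tau>\<bar> \<le> norm q * norm \<tau>" by (rule Cauchy_Schwarz_ineq2)
    also have "\<dots> \<le> norm q * R" using that by (intro mult_left_mono) auto
    finally have b: "\<bar>q \<bullet> \<tau>\<bar> \<le> 1/2" using q by linarith
    have "g \<tau> = (\<Sum>n<N. \<Sum>k\<le>n. real (n choose k) * (-1)^k * cos (p \<bullet> \<tau> + real k * (q \<bullet> \<tau>)))"
      unfolding g_def by (simp add: inner_add_left)
    moreover have "cos ((p - q) \<bullet> \<tau>) = cos (p \<bullet> \<tau> - q \<bullet> \<tau>)" by (simp add: inner_diff_left)
    ultimately show ?thesis using cos_neg_series[OF b, where a="p \<bullet> \<tau>" and N=N] N by simp
  qed
  ultimately show "\<exists>g. AR h R g \<and> (\<forall>\<tau>. norm \<tau> \<le> R \<longrightarrow> \<bar>g \<tau> - cos ((p - q) \<bullet> \<tau>)\<bar> \<le> \<epsilon>)"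
    by blast
qed

lemma AR_cos_all:
  fixes h :: "real^'d \<Rightarrow> real"
  assumes cont: "continuous_on UNIV h" and h0: "h 0 > 0"
  shows "AR h R (\<lambda>\<tau>. cos (\<omega> \<bullet> \<tau>))"
proof -
  define p where "p = (\<chi> i. max (\<omega> $ i) 0)"
  define q where "q = (\<chi> i. max (- \<omega> $ i) 0)"
  have om: "\<omega> = p - q" unfolding p_def q_def by (simp add: vec_eq_iff) linarith
  obtain M :: nat where M: "real M \<ge> 2 * norm q * \<bar>R\<bar> + 1" using real_arch_simple by blast
  have Mpos: "real M > 0" using M by (smt (verit) mult_nonneg_nonneg norm_ge_zero abs_ge_zero)
  define r where "r = inverse (real M) *\<^sub>R q"
  have rpos: "r $ i \<ge> 0" for i unfolding r_def q_def using Mpos by simp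
  have rR: "norm r * R \<le> 1/2"
  proof -
    have "norm r * R \<le> norm r * \<bar>R\<bar>" by (simp add: mult_left_mono)
    also have "\<dots> = norm q * \<bar>R\<bar> / real M" unfolding r_def using Mpos by (simp add: divide_inverse mult.commute)
    also have "\<dots> \<le> 1/2" using M Mpos by (simp add: field_simps)
    finally show ?thesis .
  qed
  have claim: "\<forall>u. (\<forall>i. u $ i \<ge> 0) \<longrightarrow> AR h R (\<lambda>\<tau>. cos ((u - real j *\<^sub>R r) \<bullet> \<tau>))" for j
  proof (induction j)
    case 0
    show ?case using AR_cos_pos[OF cont h0] by simp
  next
    case (Suc j)
    show ?case
    proof (intro allI impI)
      fix u :: "real^'d" assume u: "\<forall>i. u $ i \<ge> 0"
      have "AR h R (\<lambda>\<tau>. cos (((u - real j *\<^sub>R r) - r) \<bullet> \<tau>))"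
      proof (rule AR_cos_series[OF _ rR])
        fix k :: nat
        have "\<forall>i. (u + real k *\<^sub>R r) $ i \<ge> 0" using u rpos by simp
        hence "AR h R (\<lambda>\<tau>. cos (((u + real k *\<^sub>R r) - real j *\<^sub>R r) \<bullet> \<tau>))" using Suc.IH by blast
        moreover have "(u + real k *\<^sub>R r) - real j *\<^sub>R r = (u - real j *\<^sub>R r) + real k *\<^sub>R r" by (simp add: algebra_simps)
        ultimately show "AR h R (\<lambda>\<tau>. cos ((u - real j *\<^sub>R r + real k *\<^sub>R r) \<bullet> \<tau>))" by simp
      qed
      moreover have "(u - real j *\<^sub>R r) - r = u - real (Suc j) *\<^sub>R r" by (simp add: algebra_simps)
      ultimately show "AR h R (\<lambda>\<tau>. cos ((u - real (Suc j) *\<^sub>R r) \<bullet> \<tau>))" by simp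
    qed
  qed
  have "\<forall>i. p $ i \<ge> 0" unfolding p_def by simp
  hence "AR h R (\<lambda>\<tau>. cos ((p - real M *\<^sub>R r) \<bullet> \<tau>))" using claim by blast
  moreover have "p - real M *\<^sub>R r = \<omega>" unfolding r_def om using Mpos by simp
  ultimately show ?thesis by simp
qed


inductive_set CS :: "(real^'d \<Rightarrow> real) set" where
  CS_cos: "(\<lambda>\<tau>. cos (\<omega> \<bullet> \<tau>)) \<in> CS"
| CS_add: "f \<in> CS \<Longrightarrow> g \<in> CS \<Longrightarrow> (\<lambda>\<tau>. f \<tau> + g \<tau>) \<in> CS"
| CS_scale: "f \<in> CS \<Longrightarrow> (\<lambda>\<tau>. c * f \<tau>) \<in> CS"

inductive_set SN :: "(real^'d \<Rightarrow> real) set" where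
  SN_sin: "(\<lambda>\<tau>. sin (\<omega> \<bullet> \<tau>)) \<in> SN"
| SN_add: "f \<in> SN \<Longrightarrow> g \<in> SN \<Longrightarrow> (\<lambda>\<tau>. f \<tau> + g \<tau>) \<in> SN"
| SN_scale: "f \<in> SN \<Longrightarrow> (\<lambda>\<tau>. c * f \<tau>) \<in> SN"

lemma CS_two: "(\<lambda>\<tau>. a * cos (u \<bullet> \<tau>) + b * cos (v \<bullet> \<tau>)) \<in> CS"
  by (rule CS_add; rule CS_scale; rule CS_cos)

lemma SN_two: "(\<lambda>\<tau>. a * sin (u \<bullet> \<tau>) + b * sin (v \<bullet> \<tau>)) \<in> SN"
  by (rule SN_add; rule SN_scale; rule SN_sin)

lemma CS_const: "(\<lambda>\<tau>. c) \<in> (CS :: (real^'d \<Rightarrow> real) set)"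
proof -
  have "(\<lambda>\<tau>::real^'d. c * cos (0 \<bullet> \<tau>)) \<in> CS" by (rule CS_scale, rule CS_cos)
  thus ?thesis by simp
qed

lemma SN_zero: "(\<lambda>\<tau>. 0) \<in> (SN :: (real^'d \<Rightarrow> real) set)"
proof -
  have "(\<lambda>\<tau>::real^'d. 0 * sin (0 \<bullet> \<tau>)) \<in> SN" by (rule SN_scale, rule SN_sin)
  thus ?thesis by simp
qed

lemma CS_cos_mult:
  assumes "g \<in> CS" shows "(\<lambda>\<tau>. cos (\<omega> \<bullet> \<tau>) * g \<tau>) \<in> CS"
  using assms
proof induction
  case (CS_cos \<mu>)
  have "(\<lambda>\<tau>. (1/2) * cos ((\<omega> + \<mu>) \<bullet> \<tau>) + (1/2) * cos ((\<omega> - \<mu>) \<bullet> \<tau>)) \<in> CS" by (rule CS_two)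
  moreover have "(\<lambda>\<tau>. (1/2) * cos ((\<omega> + \<mu>) \<bullet> \<tau>) + (1/2) * cos ((\<omega> - \<mu>) \<bullet> \<tau>)) = (\<lambda>\<tau>. cos (\<omega> \<bullet> \<tau>) * cos (\<mu> \<bullet> \<tau>))"
    by (simp add: fun_eq_iff inner_add_left inner_diff_left cos_add cos_diff field_simps)
  ultimately show ?case by simp
next
  case (CS_add f g)
  have "(\<lambda>\<tau>. cos (\<omega> \<bullet> \<tau>) * f \<tau> + cos (\<omega> \<bullet> \<tau>) * g \<tau>) \<in> CS" using CS_add.IH by (rule CS.CS_add)
  thus ?case by (simp add: distrib_left)
next
  case (CS_scale f c)
  have "(\<lambda>\<tau>. c * (cos (\<omega> \<bullet> \<tau>) * f \<tau>)) \<in> CS" using CS_scale.IH by (rule CS.CS_scale)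
  thus ?case by (simp add: algebra_simps)
qed

lemma CS_mult:
  assumes "f \<in> CS" "g \<in> CS" shows "(\<lambda>\<tau>. f \<tau> * g \<tau>) \<in> CS"
  using assms(1)
proof induction
  case (CS_cos \<omega>) show ?case using CS_cos_mult[OF assms(2)] .
next
  case (CS_add f1 f2)
  have "(\<lambda>\<tau>. f1 \<tau> * g \<tau> + f2 \<tau> * g \<tau>) \<in> CS" using CS_add.IH by (rule CS.CS_add)
  thus ?case by (simp add: distrib_right)
next
  case (CS_scale f c)
  have "(\<lambda>\<tau>. c * (f \<tau> * g \<tau>)) \<in> CS" using CS_scale.IH by (rule CS.CS_scale)
  thus ?case by (simp add: algebra_simps)
qed

lemma SN_cos_mult:
  assumes "g \<in> SN" shows "(\<lambda>\<tau>. cos (\<omega> \<bullet> \<tau>) * g \<tau>) \<in> SN"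
  using assms
proof induction
  case (SN_sin \<mu>)
  have "(\<lambda>\<tau>. (1/2) * sin ((\<mu> + \<omega>) \<bullet> \<tau>) + (1/2) * sin ((\<mu> - \<omega>) \<bullet> \<tau>)) \<in> SN" by (rule SN_two)
  moreover have "(\<lambda>\<tau>. (1/2) * sin ((\<mu> + \<omega>) \<bullet> \<tau>) + (1/2) * sin ((\<mu> - \<omega>) \<bullet> \<tau>)) = (\<lambda>\<tau>. cos (\<omega> \<bullet> \<tau>) * sin (\<mu> \<bullet> \<tau>))"
    by (simp add: fun_eq_iff inner_add_left inner_diff_left sin_add sin_diff field_simps)
  ultimately show ?case by simp
next
  case (SN_add f g)
  have "(\<lambda>\<tau>. cos (\<omega> \<bullet> \<tau>) * f \<tau> + cos (\<omega> \<bullet> \<tau>) * g \<tau>) \<in> SN" using SN_add.IH by (rule SN.SN_add)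
  thus ?case by (simp add: distrib_left)
next
  case (SN_scale f c)
  have "(\<lambda>\<tau>. c * (cos (\<omega> \<bullet> \<tau>) * f \<tau>)) \<in> SN" using SN_scale.IH by (rule SN.SN_scale)
  thus ?case by (simp add: algebra_simps)
qed

lemma CS_SN_mult:
  assumes "f \<in> CS" "g \<in> SN" shows "(\<lambda>\<tau>. f \<tau> * g \<tau>) \<in> SN"
  using assms(1)
proof induction
  case (CS_cos \<omega>) show ?case using SN_cos_mult[OF assms(2)] .
next
  case (CS_add f1 f2)
  have "(\<lambda>\<tau>. f1 \<tau> * g \<tau> + f2 \<tau> * g \<tau>) \<in> SN" using CS_add.IH by (rule SN.SN_add)
  thus ?case by (simp add: distrib_right)
next
  case (CS_scale f c)
  have "(\<lambda>\<tau>. c * (f \<tau> * g \<tau>)) \<in> SN" using CS_scale.IH by (rule SN.SN_scale)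
  thus ?case by (simp add: algebra_simps)
qed

lemma SN_sin_mult:
  assumes "g \<in> SN" shows "(\<lambda>\<tau>. sin (\<omega> \<bullet> \<tau>) * g \<tau>) \<in> CS"
  using assms
proof induction
  case (SN_sin \<mu>)
  have "(\<lambda>\<tau>. (1/2) * cos ((\<omega> - \<mu>) \<bullet> \<tau>) + (-1/2) * cos ((\<omega> + \<mu>) \<bullet> \<tau>)) \<in> CS" by (rule CS_two)
  moreover have "(\<lambda>\<tau>. (1/2) * cos ((\<omega> - \<mu>) \<bullet> \<tau>) + (-1/2) * cos ((\<omega> + \<mu>) \<bullet> \<tau>)) = (\<lambda>\<tau>. sin (\<omega> \<bullet> \<tau>) * sin (\<mu> \<bullet> \<tau>))"
    by (simp add: fun_eq_iff inner_add_left inner_diff_left cos_add cos_diff field_simps)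
  ultimately show ?case by simp
next
  case (SN_add f g)
  have "(\<lambda>\<tau>. sin (\<omega> \<bullet> \<tau>) * f \<tau> + sin (\<omega> \<bullet> \<tau>) * g \<tau>) \<in> CS" using SN_add.IH by (rule CS.CS_add)
  thus ?case by (simp add: distrib_left)
next
  case (SN_scale f c)
  have "(\<lambda>\<tau>. c * (sin (\<omega> \<bullet> \<tau>) * f \<tau>)) \<in> CS" using SN_scale.IH by (rule CS.CS_scale)
  thus ?case by (simp add: algebra_simps)
qed

lemma SN_SN_mult:
  assumes "f \<in> SN" "g \<in> SN" shows "(\<lambda>\<tau>. f \<tau> * g \<tau>) \<in> CS"
  using assms(1)
proof induction
  case (SN_sin \<omega>) show ?case using SN_sin_mult[OF assms(2)] .
next
  case (SN_add f1 f2)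
  have "(\<lambda>\<tau>. f1 \<tau> * g \<tau> + f2 \<tau> * g \<tau>) \<in> CS" using SN_add.IH by (rule CS.CS_add)
  thus ?case by (simp add: distrib_right)
next
  case (SN_scale f c)
  have "(\<lambda>\<tau>. c * (f \<tau> * g \<tau>)) \<in> CS" using SN_scale.IH by (rule CS.CS_scale)
  thus ?case by (simp add: algebra_simps)
qed

lemma CS_even: "f \<in> CS \<Longrightarrow> f (- \<tau>) = f \<tau>"
  by (induction rule: CS.induct) auto

lemma SN_odd: "f \<in> SN \<Longrightarrow> f (- \<tau>) = - f \<tau>"
  by (induction rule: SN.induct) auto

lemma CS_cont: "f \<in> CS \<Longrightarrow> continuous_on UNIV f"
  by (induction rule: CS.induct) (auto intro!: continuous_intros)

lemma SN_cont: "f \<in> SN \<Longrightarrow> continuous_on UNIV f"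
  by (induction rule: SN.induct) (auto intro!: continuous_intros)

lemma CS_AR:
  fixes h :: "real^'d \<Rightarrow> real"
  assumes cont: "continuous_on UNIV h" and h0: "h 0 > 0"
  shows "f \<in> CS \<Longrightarrow> AR h R f"
proof (induction rule: CS.induct)
  case (CS_cos \<omega>) show ?case by (rule AR_cos_all[OF cont h0])
next
  case (CS_add f g) thus ?case using AR_add by blast
next
  case (CS_scale f c) thus ?case using AR_scale by blast
qed


definition TR :: "(real^'d \<Rightarrow> real) set" where
  "TR = {f. \<exists>e\<in>CS. \<exists>od\<in>SN. f = (\<lambda>\<tau>. e \<tau> + od \<tau>)}"

lemma TR_I: "e \<in> CS \<Longrightarrow> od \<in> SN \<Longrightarrow> (\<lambda>\<tau>. e \<tau> + od \<tau>) \<in> TR"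
  unfolding TR_def by blast

lemma TR_ring: "function_ring_on (TR :: (real^'d \<Rightarrow> real) set) (cball 0 R)"
proof
  show "compact (cball (0::real^'d) R)" by simp
next
  fix f :: "real^'d \<Rightarrow> real" assume "f \<in> TR"
  then obtain e od where eo: "e \<in> CS" "od \<in> SN" "f = (\<lambda>\<tau>. e \<tau> + od \<tau>)" unfolding TR_def by blast
  show "continuous_on (cball 0 R) f" unfolding eo(3)
    using CS_cont[OF eo(1)] SN_cont[OF eo(2)]
    by (intro continuous_intros) (auto intro: continuous_on_subset)
next
  fix f g :: "real^'d \<Rightarrow> real" assume "f \<in> TR" "g \<in> TR"
  then obtain e od e' od' where eo: "e \<in> CS" "od \<in> SN" "f = (\<lambda>\<tau>. e \<tau> + od \<tau>)"
    and eo': "e' \<in> CS" "od' \<in> SN" "g = (\<lambda>\<tau>. e' \<tau> + od' \<tau>)" unfolding TR_def by blast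
  have A: "(\<lambda>\<tau>. e \<tau> + e' \<tau>) \<in> CS" using eo eo' by (intro CS_add)
  have B: "(\<lambda>\<tau>. od \<tau> + od' \<tau>) \<in> SN" using eo eo' by (intro SN_add)
  have "(\<lambda>\<tau>. (e \<tau> + e' \<tau>) + (od \<tau> + od' \<tau>)) \<in> TR" by (rule TR_I[OF A B])
  moreover have "(\<lambda>x. f x + g x) = (\<lambda>\<tau>. (e \<tau> + e' \<tau>) + (od \<tau> + od' \<tau>))" using eo eo' by (simp add: algebra_simps)
  ultimately show "(\<lambda>x. f x + g x) \<in> TR" by simp
  have c1: "(\<lambda>\<tau>. e \<tau> * e' \<tau>) \<in> CS" using eo eo' by (intro CS_mult)
  have c2: "(\<lambda>\<tau>. od \<tau> * od' \<tau>) \<in> CS" using eo eo' by (intro SN_SN_mult)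
  have s1: "(\<lambda>\<tau>. e \<tau> * od' \<tau>) \<in> SN" using eo eo' by (intro CS_SN_mult)
  have s2: "(\<lambda>\<tau>. e' \<tau> * od \<tau>) \<in> SN" using eo eo' by (intro CS_SN_mult)
  have C: "(\<lambda>\<tau>. e \<tau> * e' \<tau> + od \<tau> * od' \<tau>) \<in> CS" using c1 c2 by (rule CS_add)
  have D: "(\<lambda>\<tau>. e \<tau> * od' \<tau> + e' \<tau> * od \<tau>) \<in> SN" using s1 s2 by (rule SN_add)
  have "(\<lambda>\<tau>. (e \<tau> * e' \<tau> + od \<tau> * od' \<tau>) + (e \<tau> * od' \<tau> + e' \<tau> * od \<tau>)) \<in> TR" by (rule TR_I[OF C D])
  moreover have "(\<lambda>x. f x * g x) = (\<lambda>\<tau>. (e \<tau> * e' \<tau> + od \<tau> * od' \<tau>) + (e \<tau> * od' \<tau> + e' \<tau> * od \<tau>))"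
    using eo eo' by (simp add: algebra_simps fun_eq_iff)
  ultimately show "(\<lambda>x. f x * g x) \<in> TR" by simp
next
  fix c :: real
  have "(\<lambda>\<tau>::real^'d. c + 0) \<in> TR" by (rule TR_I[OF CS_const SN_zero])
  thus "(\<lambda>_. c) \<in> (TR :: (real^'d \<Rightarrow> real) set)" by simp
next
  fix x y :: "real^'d" assume "x \<noteq> y"
  define v where "v = x - y"
  define a where "a = v \<bullet> x"
  define b where "b = v \<bullet> y"
  have "a - b = v \<bullet> (x - y)" unfolding a_def b_def by (rule inner_diff_right[symmetric])
  moreover have "v \<noteq> 0" unfolding v_def using \<open>x \<noteq> y\<close> by simp
  ultimately have ab: "a - b > 0" unfolding v_def by simp
  define t where "t = 1 / (1 + \<bar>a\<bar> + \<bar>b\<bar>)"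
  have t: "t > 0" unfolding t_def by simp
  have ta: "\<bar>t * a\<bar> \<le> 1"
  proof -
    have "\<bar>t * a\<bar> = \<bar>a\<bar> / (1 + \<bar>a\<bar> + \<bar>b\<bar>)" unfolding t_def by (simp add: abs_mult)
    also have "\<dots> \<le> 1" by (subst divide_le_eq_1_pos) auto
    finally show ?thesis .
  qed
  have tb: "\<bar>t * b\<bar> \<le> 1"
  proof -
    have "\<bar>t * b\<bar> = \<bar>b\<bar> / (1 + \<bar>a\<bar> + \<bar>b\<bar>)" unfolding t_def by (simp add: abs_mult)
    also have "\<dots> \<le> 1" by (subst divide_le_eq_1_pos) auto
    finally show ?thesis .
  qed
  have pi2: "1 \<le> pi / 2" using pi_gt3 by simp
  have ne: "t * a \<noteq> t * b" using ab t by simp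
  have r1: "- (pi/2) \<le> t * a" "t * a \<le> pi/2" using ta pi2 by (auto simp: abs_le_iff)
  have r2: "- (pi/2) \<le> t * b" "t * b \<le> pi/2" using tb pi2 by (auto simp: abs_le_iff)
  have sne: "sin (t * a) \<noteq> sin (t * b)"
    using sin_inj_pi[OF r1 r2] ne by blast
  define F where "F = (\<lambda>\<tau>::real^'d. 0 * cos (0 \<bullet> \<tau>) + sin ((t *\<^sub>R v) \<bullet> \<tau>))"
  have "(\<lambda>\<tau>::real^'d. 0 * cos (0 \<bullet> \<tau>)) \<in> CS" by (rule CS_scale, rule CS_cos)
  moreover have "(\<lambda>\<tau>::real^'d. sin ((t *\<^sub>R v) \<bullet> \<tau>)) \<in> SN" by (rule SN_sin)
  ultimately have FT: "F \<in> TR" unfolding F_def by (rule TR_I)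
  have "F x = sin (t * a)" "F y = sin (t * b)" unfolding F_def a_def b_def by simp_all
  hence "F x \<noteq> F y" using sne by simp
  thus "\<exists>f\<in>TR. f x \<noteq> f y" using FT by blast
qed

lemma AR_even:
  fixes h :: "real^'d \<Rightarrow> real"
  assumes cont: "continuous_on UNIV h" and h0: "h 0 > 0"
    and kc: "continuous_on UNIV k" and ke: "\<And>\<tau>. k (- \<tau>) = k \<tau>"
  shows "AR h R k"
proof (rule AR_lim)
  fix \<epsilon> :: real assume e: "\<epsilon> > 0"
  interpret function_ring_on TR "cball (0::real^'d) R" by (rule TR_ring)
  have "continuous_on (cball 0 R) k" using kc by (rule continuous_on_subset) simp
  from Stone_Weierstrass[OF this] obtain F where F: "F \<in> UNIV \<rightarrow> TR" "uniform_limit (cball 0 R) F k sequentially"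
    by blast
  from uniform_limitD[OF F(2) e] obtain N where N: "\<forall>x\<in>cball 0 R. dist (F N x) (k x) < \<epsilon>"
    unfolding eventually_sequentially by blast
  have "F N \<in> TR" using F(1) by blast
  then obtain ev od where eo: "ev \<in> CS" "od \<in> SN" "F N = (\<lambda>\<tau>. ev \<tau> + od \<tau>)" unfolding TR_def by blast
  have "\<bar>ev \<tau> - k \<tau>\<bar> \<le> \<epsilon>" if "norm \<tau> \<le> R" for \<tau>
  proof -
    have "\<tau> \<in> cball 0 R" "- \<tau> \<in> cball 0 R" using that by auto
    hence 1: "\<bar>ev \<tau> + od \<tau> - k \<tau>\<bar> < \<epsilon>" and 2: "\<bar>ev (- \<tau>) + od (- \<tau>) - k (- \<tau>)\<bar> < \<epsilon>"
      using N eo(3) by (auto simp: dist_real_def)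
    have "ev (- \<tau>) = ev \<tau>" by (rule CS_even[OF eo(1)])
    moreover have "od (- \<tau>) = - od \<tau>" by (rule SN_odd[OF eo(2)])
    ultimately have 3: "\<bar>ev \<tau> - od \<tau> - k \<tau>\<bar> < \<epsilon>" using 2 ke by simp
    show ?thesis using 1 3 by linarith
  qed
  thus "\<exists>g. AR h R g \<and> (\<forall>\<tau>. norm \<tau> \<le> R \<longrightarrow> \<bar>g \<tau> - k \<tau>\<bar> \<le> \<epsilon>)"
    using CS_AR[OF cont h0 eo(1)] by blast
qed

theorem theorem3:
  fixes h :: "real^'d \<Rightarrow> real"
  assumes "continuous_on UNIV h"
    and "integrable lborel h"
    and "psd_fun h"
    and "\<And>\<tau>. h \<tau> > 0"
  shows "\<forall>k :: real^'d \<Rightarrow> real. continuous_on UNIV k \<and> psd_fun k \<longrightarrow>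
           (\<exists>s :: nat \<Rightarrow> real^'d \<Rightarrow> real. (\<forall>n. s n \<in> kernel_family h) \<and>
              (\<forall>\<tau>. (\<lambda>n. s n \<tau>) \<longlonglongrightarrow> k \<tau>))"
proof (intro allI impI)
  fix k :: "real^'d \<Rightarrow> real"
  assume k: "continuous_on UNIV k \<and> psd_fun k"
  have ke: "k (- \<tau>) = k \<tau>" for \<tau> using k unfolding psd_fun_def by blast
  have h0: "h 0 > 0" using assms(4) .
  have "\<forall>n::nat. \<exists>f. f \<in> kernel_family h \<and> (\<forall>\<tau>. norm \<tau> \<le> real n \<longrightarrow> \<bar>f \<tau> - k \<tau>\<bar> \<le> 1 / (real n + 1))"
  proof
    fix n :: nat
    have "AR h (real n) k" using AR_even[OF assms(1) h0] k ke by blast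
    moreover have "1 / (real n + 1) > 0" by simp
    ultimately show "\<exists>f. f \<in> kernel_family h \<and> (\<forall>\<tau>. norm \<tau> \<le> real n \<longrightarrow> \<bar>f \<tau> - k \<tau>\<bar> \<le> 1 / (real n + 1))"
      unfolding AR_def by blast
  qed
  then obtain s where s: "\<And>n. s n \<in> kernel_family h"
    "\<And>n \<tau>. norm \<tau> \<le> real n \<Longrightarrow> \<bar>s n \<tau> - k \<tau>\<bar> \<le> 1 / (real n + 1)"
    by metis
  have "(\<lambda>n. s n \<tau>) \<longlonglongrightarrow> k \<tau>" for \<tau>
  proof (rule LIMSEQ_I)
    fix r :: real assume r: "r > 0"
    obtain N1 :: nat where N1: "norm \<tau> \<le> real N1" using real_arch_simple by blast
    obtain N2 :: nat where N2: "1 / r < real N2" using reals_Archimedean2 by blast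
    show "\<exists>no. \<forall>n\<ge>no. norm (s n \<tau> - k \<tau>) < r"
    proof (intro exI allI impI)
      fix n assume n: "max N1 N2 \<le> n"
      have "norm \<tau> \<le> real n" using N1 n by linarith
      hence "\<bar>s n \<tau> - k \<tau>\<bar> \<le> 1 / (real n + 1)" by (rule s(2))
      also have "\<dots> < r"
      proof -
        have "1 / r < real n + 1" using N2 n by linarith
        thus ?thesis using r by (simp add: field_simps)
      qed
      finally show "norm (s n \<tau> - k \<tau>) < r" by simp
    qed
  qed
  thus "\<exists>s :: nat \<Rightarrow> real^'d \<Rightarrow> real. (\<forall>n. s n \<in> kernel_family h) \<and> (\<forall>\<tau>. (\<lambda>n. s n \<tau>) \<longlonglongrightarrow> k \<tau>)"
    using s(1) by blast
qed

end
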